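(* In the binary setting below, the mean squared error satisfies $$\mathrm{MSE}(S,Q)=\mathrm{CL}+\mathrm{GL}\ \ge\ \ell^2\text{-}\mathrm{ECE}_B+\mathcal{L}_{\mathrm{GL}_B}-\mathbb{E}\Big[\sqrt{\mathrm{Var}(S\mid S_B)}\big(2\sqrt{\mathrm{Var}(C\mid S_B)}-\sqrt{\mathrm{Var}(S\mid S_B)}\big)\Big]$$ $$\ge\ \ell^2\text{-}\mathrm{ECE}_B+\mathcal{L}_{\mathrm{GL}_B}-\mathbb{E}\Big[\sqrt{\mathrm{Var}(S\mid S_B)}\big(2\sqrt{C_B(1-C_B)}-\sqrt{\mathrm{Var}(S\mid S_B)}\big)\Big],$$ and, with $N$ equal-width bins, $\mathrm{MSE}(S,Q)\ge\ell^2\text{-}\mathrm{ECE}_B+\mathcal{L}_{\mathrm{GL}_B}-\frac1N\mathbb{E}\big[\sqrt{C_B(1-C_B)}\big]$.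
   Context: Binary setting: $(X,Y)$ jointly distributed with $X\in\mathcal{X}$, $Y\in\{0,1\}$; $Q:=P(Y=1\mid X)$; $S=f(X)\in[0,1]$ is a classifier's confidence for the positive class; $C:=\mathbb{E}[Q\mid S]$. $\mathrm{MSE}(S,Q):=\mathbb{E}[(S-Q)^2]$, $\mathrm{CL}:=\mathbb{E}[(S-C)^2]$, $\mathrm{GL}:=\mathbb{E}[(C-Q)^2]$. Given a partition of $[0,1]$ into interval bins $\mathcal{B}_j$, $S_B$ equals $\mathbb{E}[S\mid S\in\mathcal{B}_j]$ on $\{S\in\mathcal{B}_j\}$, $C_B:=\mathbb{E}[Q\mid S_B]$. $\ell^2\text{-}\mathrm{ECE}_B:=\mathbb{E}[(S_B-C_B)^2]$ is the $\ell^2$ expected calibration error of the binned classifier, and $\mathcal{L}_{\mathrm{GL}_B}:=\mathbb{E}[\mathrm{Var}(\mathbb{E}[Q\mid S_B,\mathscr{R}]\mid S_B)]$ is the grouping loss lower bound of $S_B$ for a partition $\mathscr{R}:\mathcal{X}\to\mathbb{N}$ of the feature space (with $\mathscr{R}=\mathscr{R}(X)$). $\mathrm{Var}(\cdot\mid S_B)$ is the ordinary conditional variance. "$N$ equal-width bins" means the bins are the intervals of length $1/N$ partitioning $[0,1]$. *)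

theory Defs
  imports "HOL-Probability.Probability"
begin

definition gen :: "'a measure \<Rightarrow> 'b measure \<Rightarrow> ('a \<Rightarrow> 'b) \<Rightarrow> 'a measure" where
  "gen M N g = vimage_algebra (space M) g N"

definition cond_var :: "'a measure \<Rightarrow> 'a measure \<Rightarrow> ('a \<Rightarrow> real) \<Rightarrow> 'a \<Rightarrow> real" where
  "cond_var M F f = real_cond_exp M F (\<lambda>\<omega>. (f \<omega> - real_cond_exp M F f \<omega>)\<^sup>2)"

definition interval_partition :: "(nat \<Rightarrow> real set) \<Rightarrow> nat set \<Rightarrow> bool" where
  "interval_partition B J \<longleftrightarrow>
     (\<forall>j\<in>J. B j \<noteq> {} \<and> is_interval (B j)) \<and> disjoint_family_on B J \<and> (\<Union>j\<in>J. B j) = {0..1}"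

definition eq_bins :: "nat \<Rightarrow> nat \<Rightarrow> real set" where
  "eq_bins N j = (if j + 1 < N then {real j / real N ..< real (j + 1) / real N}
                  else {real j / real N .. real (j + 1) / real N})"

(* binned classifier S_B: on {S \<in> B j} it equals E[S | S \<in> B j] *)
definition binned :: "'a measure \<Rightarrow> (nat \<Rightarrow> real set) \<Rightarrow> nat set \<Rightarrow> ('a \<Rightarrow> real) \<Rightarrow> 'a \<Rightarrow> real" where
  "binned M B J S \<omega> =
     (let j = (THE j. j \<in> J \<and> S \<omega> \<in> B j);
          E = {\<omega>' \<in> space M. S \<omega>' \<in> B j}
      in (\<integral>\<omega>'. indicator E \<omega>' * S \<omega>' \<partial>M) / measure M E)"

definition bin_sigma :: "'a measure \<Rightarrow> (nat \<Rightarrow> real set) \<Rightarrow> nat set \<Rightarrow> ('a \<Rightarrow> real) \<Rightarrow> 'a measure" where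
  "bin_sigma M B J S = gen M borel (binned M B J S)"

definition bin_calib :: "'a measure \<Rightarrow> (nat \<Rightarrow> real set) \<Rightarrow> nat set \<Rightarrow> ('a \<Rightarrow> real) \<Rightarrow> ('a \<Rightarrow> real) \<Rightarrow> 'a \<Rightarrow> real" where
  "bin_calib M B J S Q = real_cond_exp M (bin_sigma M B J S) Q"

definition MSE :: "'a measure \<Rightarrow> ('a \<Rightarrow> real) \<Rightarrow> ('a \<Rightarrow> real) \<Rightarrow> real" where
  "MSE M S Q = (\<integral>\<omega>. (S \<omega> - Q \<omega>)\<^sup>2 \<partial>M)"

definition calib :: "'a measure \<Rightarrow> ('a \<Rightarrow> real) \<Rightarrow> ('a \<Rightarrow> real) \<Rightarrow> 'a \<Rightarrow> real" where
  "calib M S Q = real_cond_exp M (gen M borel S) Q"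

definition CL :: "'a measure \<Rightarrow> ('a \<Rightarrow> real) \<Rightarrow> ('a \<Rightarrow> real) \<Rightarrow> real" where
  "CL M S Q = (\<integral>\<omega>. (S \<omega> - calib M S Q \<omega>)\<^sup>2 \<partial>M)"

definition GL :: "'a measure \<Rightarrow> ('a \<Rightarrow> real) \<Rightarrow> ('a \<Rightarrow> real) \<Rightarrow> real" where
  "GL M S Q = (\<integral>\<omega>. (calib M S Q \<omega> - Q \<omega>)\<^sup>2 \<partial>M)"

definition ece_B :: "'a measure \<Rightarrow> (nat \<Rightarrow> real set) \<Rightarrow> nat set \<Rightarrow> ('a \<Rightarrow> real) \<Rightarrow> ('a \<Rightarrow> real) \<Rightarrow> real" where
  "ece_B M B J S Q = (\<integral>\<omega>. (binned M B J S \<omega> - bin_calib M B J S Q \<omega>)\<^sup>2 \<partial>M)"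

(* grouping loss lower bound E[Var(E[Q | S_B, R] | S_B)]; Rw = R(X) as a random variable *)
definition GL_lower :: "'a measure \<Rightarrow> (nat \<Rightarrow> real set) \<Rightarrow> nat set \<Rightarrow> ('a \<Rightarrow> real) \<Rightarrow> ('a \<Rightarrow> real)
                        \<Rightarrow> ('a \<Rightarrow> nat) \<Rightarrow> real" where
  "GL_lower M B J S Q Rw =
     (\<integral>\<omega>. cond_var M (bin_sigma M B J S)
              (real_cond_exp M (gen M (borel \<Otimes>\<^sub>M count_space UNIV) (\<lambda>\<omega>'. (binned M B J S \<omega>', Rw \<omega>'))) Q) \<omega> \<partial>M)"

end

theory Submission
  imports Defs
begin
definition bdd :: "'a measure \<Rightarrow> ('a \<Rightarrow> real) \<Rightarrow> bool" where
  "bdd M f \<longleftrightarrow> f \<in> borel_measurable M \<and> (\<exists>c. AE x in M. \<bar>f x\<bar> \<le> c)"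

lemma bdd_meas: "bdd M f \<Longrightarrow> f \<in> borel_measurable M" by (simp add: bdd_def)

lemma bdd_integrable: "prob_space M \<Longrightarrow> bdd M f \<Longrightarrow> integrable M f"
proof -
  assume P: "prob_space M" and b: "bdd M f"
  interpret prob_space M by fact
  obtain c where c: "AE x in M. \<bar>f x\<bar> \<le> c" and m: "f \<in> borel_measurable M" using b bdd_def by blast
  show ?thesis by (rule integrable_const_bound[where B=c]) (use c m in auto)
qed

lemma bdd_const: "bdd M (\<lambda>x. c)"
  unfolding bdd_def by (intro conjI exI[of _ "\<bar>c\<bar>"]) auto

lemma bdd_add: "bdd M f \<Longrightarrow> bdd M g \<Longrightarrow> bdd M (\<lambda>x. f x + g x)"
  unfolding bdd_def
proof (elim conjE exE, intro conjI)
  fix c d assume a: "AE x in M. \<bar>f x\<bar> \<le> c" and b: "AE x in M. \<bar>g x\<bar> \<le> d"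
  have "AE x in M. \<bar>f x + g x\<bar> \<le> c + d" using a b by eventually_elim linarith
  then show "\<exists>c. AE x in M. \<bar>f x + g x\<bar> \<le> c" by blast
qed auto

lemma bdd_mult: "bdd M f \<Longrightarrow> bdd M g \<Longrightarrow> bdd M (\<lambda>x. f x * g x)"
  unfolding bdd_def
proof (elim conjE exE, intro conjI)
  fix c d assume a: "AE x in M. \<bar>f x\<bar> \<le> c" and b: "AE x in M. \<bar>g x\<bar> \<le> d"
  have "AE x in M. \<bar>f x * g x\<bar> \<le> c * d" using a b
  proof eventually_elim
    case (elim x)
    then show ?case unfolding abs_mult by (meson abs_ge_zero mult_mono order_trans)
  qed
  then show "\<exists>c. AE x in M. \<bar>f x * g x\<bar> \<le> c" by blast
qed auto

lemma bdd_minus: "bdd M f \<Longrightarrow> bdd M (\<lambda>x. - f x)"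
  unfolding bdd_def by auto

lemma bdd_diff: "bdd M f \<Longrightarrow> bdd M g \<Longrightarrow> bdd M (\<lambda>x. f x - g x)"
  using bdd_add[OF _ bdd_minus] by simp

lemma bdd_sq: "bdd M f \<Longrightarrow> bdd M (\<lambda>x. (f x)\<^sup>2)"
  using bdd_mult[of M f f] by (simp add: power2_eq_square)

lemma bdd_sqrt: "bdd M f \<Longrightarrow> bdd M (\<lambda>x. sqrt (f x))"
  unfolding bdd_def
proof (elim conjE exE, intro conjI)
  fix c assume a: "AE x in M. \<bar>f x\<bar> \<le> c"
  have "AE x in M. \<bar>sqrt (f x)\<bar> \<le> sqrt c" using a
  proof eventually_elim
    case (elim x)
    have "\<bar>sqrt (f x)\<bar> = sqrt \<bar>f x\<bar>" by (cases "f x \<ge> 0") (auto simp: real_sqrt_minus)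
    then show ?case using elim by simp
  qed
  then show "\<exists>c. AE x in M. \<bar>sqrt (f x)\<bar> \<le> c" by blast
qed auto

lemma bdd_AE:
  assumes "bdd M f" "g \<in> borel_measurable M" "AE x in M. f x = g x" shows "bdd M g"
proof -
  obtain c where a: "AE x in M. \<bar>f x\<bar> \<le> c" using assms(1) bdd_def by blast
  have "AE x in M. \<bar>g x\<bar> \<le> c" using a assms(3) by eventually_elim metis
  then show ?thesis using assms(2) bdd_def by blast
qed

lemma bdd_bound: "f \<in> borel_measurable M \<Longrightarrow> AE x in M. \<bar>f x\<bar> \<le> c \<Longrightarrow> bdd M f"
  unfolding bdd_def by auto

lemma bdd_cond_exp:
  assumes "sigma_finite_subalgebra M F" "prob_space M" "bdd M f"
  shows "bdd M (real_cond_exp M F f)"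
proof -
  interpret sigma_finite_subalgebra M F by fact
  obtain c where c: "AE x in M. \<bar>f x\<bar> \<le> c" using assms(3) bdd_def by blast
  have i: "integrable M f" using assms bdd_integrable by blast
  have "AE x in M. real_cond_exp M F f x \<le> c"
    by (rule real_cond_exp_le_c[OF i]) (use c in auto)
  moreover have "AE x in M. real_cond_exp M F f x \<ge> -c"
    by (rule real_cond_exp_ge_c[OF i]) (use c in auto)
  ultimately show ?thesis unfolding bdd_def
    by (intro conjI exI[of _ c] borel_measurable_cond_exp2) auto
qed

lemma gen_subalg: "g \<in> measurable M K \<Longrightarrow> subalgebra M (gen M K g)"
  unfolding subalgebra_def gen_def
  by (auto simp: sets_vimage_algebra2 measurable_def)

lemma gen_sfs: "prob_space M \<Longrightarrow> g \<in> measurable M K \<Longrightarrow> sigma_finite_subalgebra M (gen M K g)"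
  apply (rule finite_measure_subalgebra_is_sigma_finite)
  apply (simp add: finite_measure_subalgebra_def finite_measure_subalgebra_axioms_def gen_subalg prob_space.finite_measure)
  done

lemma gen_meas: "g \<in> space M \<rightarrow> space K \<Longrightarrow> g \<in> measurable (gen M K g) K"
  unfolding gen_def by (rule measurable_vimage_algebra1)

lemma gen_comp_sub:
  assumes g: "g \<in> space M \<rightarrow> space K" and phi: "\<phi> \<in> measurable K L"
  shows "subalgebra (gen M K g) (gen M L (\<lambda>\<omega>. \<phi> (g \<omega>)))"
proof -
  have pg: "(\<lambda>\<omega>. \<phi> (g \<omega>)) \<in> space M \<rightarrow> space L" using g phi by (auto simp: measurable_def)
  have "sets (gen M L (\<lambda>\<omega>. \<phi> (g \<omega>))) \<subseteq> sets (gen M K g)"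
  proof
    fix A assume "A \<in> sets (gen M L (\<lambda>\<omega>. \<phi> (g \<omega>)))"
    then obtain U where U: "U \<in> sets L" "A = (\<lambda>\<omega>. \<phi> (g \<omega>)) -` U \<inter> space M"
      unfolding gen_def sets_vimage_algebra2[OF pg] by auto
    have "A = g -` (\<phi> -` U \<inter> space K) \<inter> space M" using U g by auto
    moreover have "\<phi> -` U \<inter> space K \<in> sets K" using phi U measurable_sets by blast
    ultimately show "A \<in> sets (gen M K g)"
      unfolding gen_def sets_vimage_algebra2[OF g] by blast
  qed
  then show ?thesis unfolding subalgebra_def gen_def by simp
qed

lemma pyth:
  assumes P: "prob_space M" and G: "sigma_finite_subalgebra M G" and h: "bdd M h" and g: "bdd M g"
    and gG: "g \<in> borel_measurable G"
  shows "(\<integral>x. (h x - g x)\<^sup>2 \<partial>M) = (\<integral>x. (h x - real_cond_exp M G h x)\<^sup>2 \<partial>M) + (\<integral>x. (real_cond_exp M G h x - g x)\<^sup>2 \<partial>M)"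
proof -
  interpret sigma_finite_subalgebra M G by fact
  define e where "e = real_cond_exp M G h"
  have be: "bdd M e" unfolding e_def using bdd_cond_exp[OF G P h] .
  have eG: "e \<in> borel_measurable G" unfolding e_def by simp
  have I: "bdd M f \<Longrightarrow> integrable M f" for f using bdd_integrable[OF P] .
  have fG: "(\<lambda>x. e x - g x) \<in> borel_measurable G" using eG gG by measurable
  have int1: "integrable M (\<lambda>x. (e x - g x) * h x)" by (intro I bdd_mult bdd_diff be g h)
  have "(\<integral>x. (e x - g x) * e x \<partial>M) = (\<integral>x. (e x - g x) * h x \<partial>M)"
    unfolding e_def by (rule real_cond_exp_intg(2)[OF int1[unfolded e_def] fG[unfolded e_def] bdd_meas[OF h]])
  then have cross: "(\<integral>x. (h x - e x) * (e x - g x) \<partial>M) = 0"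
  proof -
    assume a: "(\<integral>x. (e x - g x) * e x \<partial>M) = (\<integral>x. (e x - g x) * h x \<partial>M)"
    have "(\<integral>x. (h x - e x) * (e x - g x) \<partial>M) = (\<integral>x. (e x - g x) * h x - (e x - g x) * e x \<partial>M)"
      by (simp add: algebra_simps)
    also have "\<dots> = (\<integral>x. (e x - g x) * h x \<partial>M) - (\<integral>x. (e x - g x) * e x \<partial>M)"
      by (intro Bochner_Integration.integral_diff I bdd_mult bdd_diff be g h)
    finally show ?thesis using a by simp
  qed
  have "(\<integral>x. (h x - g x)\<^sup>2 \<partial>M) = (\<integral>x. (h x - e x)\<^sup>2 + (e x - g x)\<^sup>2 + 2 * ((h x - e x) * (e x - g x)) \<partial>M)"
    by (rule Bochner_Integration.integral_cong) (auto simp: power2_eq_square algebra_simps)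
  also have "\<dots> = (\<integral>x. (h x - e x)\<^sup>2 \<partial>M) + (\<integral>x. (e x - g x)\<^sup>2 \<partial>M) + 2 * (\<integral>x. (h x - e x) * (e x - g x) \<partial>M)"
    by (subst Bochner_Integration.integral_add, (intro I bdd_add bdd_mult bdd_sq bdd_diff bdd_const be g h)+,
        subst Bochner_Integration.integral_add, (intro I bdd_add bdd_mult bdd_sq bdd_diff bdd_const be g h)+) simp
  finally show ?thesis using cross unfolding e_def by simp
qed

lemma le_eps_lemma:
  fixes x y K :: real
  assumes "\<And>e. e > 0 \<Longrightarrow> x \<le> y + e * K"
  shows "x \<le> y"
proof (rule ccontr)
  assume "\<not> x \<le> y"
  define e where "e = (x - y) / (2 * (\<bar>K\<bar> + 1))"
  have e0: "e > 0" using \<open>\<not> x \<le> y\<close> by (simp add: e_def)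
  have "e * K \<le> e * \<bar>K\<bar>" using e0 by (simp add: mult_left_mono)
  also have "\<dots> < e * (2 * (\<bar>K\<bar> + 1))" using e0 by (intro mult_strict_left_mono) auto
  also have "\<dots> = x - y" unfolding e_def by (simp add: field_simps)
  finally show False using assms[OF e0] by simp
qed

lemma cs:
  assumes P: "prob_space M" and F: "sigma_finite_subalgebra M F" and a: "bdd M a" and b: "bdd M b"
  shows "(\<integral>x. a x * b x \<partial>M) \<le> (\<integral>x. sqrt (real_cond_exp M F (\<lambda>x. (a x)\<^sup>2) x) * sqrt (real_cond_exp M F (\<lambda>x. (b x)\<^sup>2) x) \<partial>M)"
proof -
  interpret sigma_finite_subalgebra M F by fact
  define A where "A = real_cond_exp M F (\<lambda>x. (a x)\<^sup>2)"
  define B where "B = real_cond_exp M F (\<lambda>x. (b x)\<^sup>2)"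
  define u where "u = (\<lambda>x. sqrt (A x))"
  define v where "v = (\<lambda>x. sqrt (B x))"
  have I: "bdd M f \<Longrightarrow> integrable M f" for f using bdd_integrable[OF P] .
  have am[measurable]: "a \<in> borel_measurable M" and bm[measurable]: "b \<in> borel_measurable M" using a b bdd_meas by auto
  have AF[measurable]: "A \<in> borel_measurable F" "A \<in> borel_measurable M" unfolding A_def by auto
  have BF[measurable]: "B \<in> borel_measurable F" "B \<in> borel_measurable M" unfolding B_def by auto
  have uF[measurable]: "u \<in> borel_measurable F" "u \<in> borel_measurable M" unfolding u_def by measurable
  have vF[measurable]: "v \<in> borel_measurable F" "v \<in> borel_measurable M" unfolding v_def by measurable
  have bA: "bdd M A" unfolding A_def by (rule bdd_cond_exp[OF F P bdd_sq[OF a]])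
  have bB: "bdd M B" unfolding B_def by (rule bdd_cond_exp[OF F P bdd_sq[OF b]])
  have bu: "bdd M u" unfolding u_def by (rule bdd_sqrt[OF bA])
  have bv: "bdd M v" unfolding v_def by (rule bdd_sqrt[OF bB])
  have A0: "AE x in M. A x \<ge> 0" unfolding A_def by (rule real_cond_exp_pos) auto
  have B0: "AE x in M. B x \<ge> 0" unfolding B_def by (rule real_cond_exp_pos) auto
  obtain c1 where c1: "AE x in M. \<bar>u x\<bar> \<le> c1" using bu bdd_def by blast
  obtain c2 where c2: "AE x in M. \<bar>v x\<bar> \<le> c2" using bv bdd_def by blast
  have key: "(\<integral>x. a x * b x \<partial>M) \<le> (\<integral>x. u x * v x \<partial>M) + e * ((c1 + c2) / 2)" if e0: "e > 0" for e
  proof -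
    define l where "l = (\<lambda>x. (v x + e) / (u x + e))"
    define m where "m = (\<lambda>x. (u x + e) / (v x + e))"
    have lF[measurable]: "l \<in> borel_measurable F" "l \<in> borel_measurable M" unfolding l_def by measurable
    have mF[measurable]: "m \<in> borel_measurable F" "m \<in> borel_measurable M" unfolding m_def by measurable
    have u0: "AE x in M. u x \<ge> 0" using A0 unfolding u_def by eventually_elim simp
    have v0: "AE x in M. v x \<ge> 0" using B0 unfolding v_def by eventually_elim simp
    have bl: "bdd M l"
    proof (rule bdd_bound[OF lF(2)])
      show "AE x in M. \<bar>l x\<bar> \<le> (c2 + e) / e" using u0 v0 c2
      proof eventually_elim
        case (elim x)
        have "l x \<ge> 0" unfolding l_def using elim e0 by simp
        moreover have "l x \<le> (c2 + e) / e" unfolding l_def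
          by (rule frac_le) (use elim e0 in auto)
        ultimately show ?case by simp
      qed
    qed
    have bm': "bdd M m"
    proof (rule bdd_bound[OF mF(2)])
      show "AE x in M. \<bar>m x\<bar> \<le> (c1 + e) / e" using u0 v0 c1
      proof eventually_elim
        case (elim x)
        have "m x \<ge> 0" unfolding m_def using elim e0 by simp
        moreover have "m x \<le> (c1 + e) / e" unfolding m_def
          by (rule frac_le) (use elim e0 in auto)
        ultimately show ?case by simp
      qed
    qed
    have ptw: "AE x in M. 2 * (a x * b x) \<le> l x * (a x)\<^sup>2 + m x * (b x)\<^sup>2" using u0 v0
    proof eventually_elim
      case (elim x)
      have p1: "u x + e > 0" "v x + e > 0" using elim e0 by auto
      have lm: "l x * m x = 1" unfolding l_def m_def using p1 by simp
      have mpos: "m x \<ge> 0" unfolding m_def using elim e0 by simp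
      have "l x * (a x)\<^sup>2 + m x * (b x)\<^sup>2 - 2 * (a x * b x) = m x * (l x * a x - b x)\<^sup>2"
        using lm by (simp add: power2_eq_square algebra_simps)
      also have "\<dots> \<ge> 0" using mpos by simp
      finally show ?case by simp
    qed
    have i1: "(\<integral>x. l x * A x \<partial>M) = (\<integral>x. l x * (a x)\<^sup>2 \<partial>M)" unfolding A_def
      by (rule real_cond_exp_intg(2)) (auto intro!: I bdd_mult bl bdd_sq a)
    have i2: "(\<integral>x. m x * B x \<partial>M) = (\<integral>x. m x * (b x)\<^sup>2 \<partial>M)" unfolding B_def
      by (rule real_cond_exp_intg(2)) (auto intro!: I bdd_mult bm' bdd_sq b)
    have ptw2: "AE x in M. l x * A x + m x * B x \<le> 2 * (u x * v x) + e * (u x + v x)" using A0 B0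
    proof eventually_elim
      case (elim x)
      have uu: "A x = (u x)\<^sup>2" "u x \<ge> 0" unfolding u_def using elim by auto
      have vv: "B x = (v x)\<^sup>2" "v x \<ge> 0" unfolding v_def using elim by auto
      have "l x * A x = (v x + e) * ((u x)\<^sup>2 / (u x + e))" unfolding l_def uu by simp
      also have "\<dots> \<le> (v x + e) * u x"
      proof (rule mult_left_mono)
        show "(u x)\<^sup>2 / (u x + e) \<le> u x" using uu e0 by (simp add: divide_le_eq power2_eq_square algebra_simps)
      qed (use vv e0 in simp)
      finally have 1: "l x * A x \<le> (v x + e) * u x" .
      have "m x * B x = (u x + e) * ((v x)\<^sup>2 / (v x + e))" unfolding m_def vv by simp
      also have "\<dots> \<le> (u x + e) * v x"
      proof (rule mult_left_mono)
        show "(v x)\<^sup>2 / (v x + e) \<le> v x" using vv e0 by (simp add: divide_le_eq power2_eq_square algebra_simps)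
      qed (use uu e0 in simp)
      finally have 2: "m x * B x \<le> (u x + e) * v x" .
      show ?case using 1 2 by (simp add: algebra_simps)
    qed
    have "2 * (\<integral>x. a x * b x \<partial>M) = (\<integral>x. 2 * (a x * b x) \<partial>M)" by simp
    also have "\<dots> \<le> (\<integral>x. l x * (a x)\<^sup>2 + m x * (b x)\<^sup>2 \<partial>M)"
      by (rule integral_mono_AE[OF _ _ ptw]) (auto intro!: I bdd_mult bdd_add bl bm' bdd_sq a b bdd_const)
    also have "\<dots> = (\<integral>x. l x * (a x)\<^sup>2 \<partial>M) + (\<integral>x. m x * (b x)\<^sup>2 \<partial>M)"
      by (rule Bochner_Integration.integral_add) (auto intro!: I bdd_mult bl bm' bdd_sq a b)
    also have "\<dots> = (\<integral>x. l x * A x + m x * B x \<partial>M)"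
      unfolding i1[symmetric] i2[symmetric]
      by (rule Bochner_Integration.integral_add[symmetric]) (auto intro!: I bdd_mult bl bm' bA bB)
    also have "\<dots> \<le> (\<integral>x. 2 * (u x * v x) + e * (u x + v x) \<partial>M)"
      by (rule integral_mono_AE[OF _ _ ptw2]) (auto intro!: I bdd_mult bdd_add bl bm' bA bB bu bv bdd_const)
    also have "\<dots> = 2 * (\<integral>x. u x * v x \<partial>M) + e * ((\<integral>x. u x \<partial>M) + (\<integral>x. v x \<partial>M))"
    proof -
      have "(\<integral>x. 2 * (u x * v x) + e * (u x + v x) \<partial>M) = (\<integral>x. 2 * (u x * v x) \<partial>M) + (\<integral>x. e * (u x + v x) \<partial>M)"
        by (rule Bochner_Integration.integral_add) (auto intro!: I bdd_mult bdd_add bu bv bdd_const)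
      moreover have "(\<integral>x. u x + v x \<partial>M) = (\<integral>x. u x \<partial>M) + (\<integral>x. v x \<partial>M)"
        by (rule Bochner_Integration.integral_add) (auto intro!: I bu bv)
      ultimately show ?thesis by simp
    qed
    also have "\<dots> \<le> 2 * (\<integral>x. u x * v x \<partial>M) + e * (c1 + c2)"
    proof -
      interpret prob_space M by fact
      have "(\<integral>x. u x \<partial>M) \<le> (\<integral>x. c1 \<partial>M)"
        by (rule integral_mono_AE) (use c1 in \<open>auto intro!: I bu bdd_const\<close>)
      moreover have "(\<integral>x. v x \<partial>M) \<le> (\<integral>x. c2 \<partial>M)"
        by (rule integral_mono_AE) (use c2 in \<open>auto intro!: I bv bdd_const\<close>)
      ultimately show ?thesis using e0 by (simp add: prob_space)
    qed
    finally show ?thesis by (simp add: field_simps)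
  qed
  have "(\<integral>x. a x * b x \<partial>M) \<le> (\<integral>x. u x * v x \<partial>M)"
    by (rule le_eps_lemma[OF key])
  then show ?thesis unfolding u_def v_def A_def B_def .
qed

lemmas bdd_intros = bdd_add bdd_mult bdd_diff bdd_sq bdd_sqrt bdd_const bdd_minus

lemma cond_var_le:
  assumes P: "prob_space M" and G: "sigma_finite_subalgebra M G" and S: "bdd M S" and c: "bdd M c"
    and cG: "c \<in> borel_measurable G" and K: "AE x in M. (S x - c x)\<^sup>2 \<le> K"
  shows "AE x in M. cond_var M G S x \<le> K"
proof -
  interpret sigma_finite_subalgebra M G by fact
  define e where "e = real_cond_exp M G S"
  have I: "bdd M f \<Longrightarrow> integrable M f" for f using bdd_integrable[OF P] .
  have be: "bdd M e" unfolding e_def by (rule bdd_cond_exp[OF G P S])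
  have eG: "e \<in> borel_measurable G" unfolding e_def by simp
  have Sm[measurable]: "S \<in> borel_measurable M" using S bdd_meas by auto
  have cm[measurable]: "c \<in> borel_measurable M" using c bdd_meas by auto
    have em[measurable]: "e \<in> borel_measurable M" unfolding e_def by simp
  have 1: "AE x in M. real_cond_exp M G (\<lambda>x. (S x - c x)\<^sup>2) x = real_cond_exp M G (\<lambda>x. ((S x - e x)\<^sup>2 + 2 * (e x - c x) * (S x - e x)) + (e x - c x)\<^sup>2) x"
  proof (rule real_cond_exp_cong)
    show "AE x in M. (S x - c x)\<^sup>2 = (S x - e x)\<^sup>2 + 2 * (e x - c x) * (S x - e x) + (e x - c x)\<^sup>2"
      by (intro AE_I2) (simp add: power2_eq_square algebra_simps)
  qed (rule bdd_meas, intro bdd_intros S be c)+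
  have 2: "AE x in M. real_cond_exp M G (\<lambda>x. ((S x - e x)\<^sup>2 + 2 * (e x - c x) * (S x - e x)) + (e x - c x)\<^sup>2) x
      = real_cond_exp M G (\<lambda>x. (S x - e x)\<^sup>2 + 2 * (e x - c x) * (S x - e x)) x + real_cond_exp M G (\<lambda>x. (e x - c x)\<^sup>2) x"
    by (rule real_cond_exp_add; intro I bdd_intros S be c)
  have 3: "AE x in M. real_cond_exp M G (\<lambda>x. (S x - e x)\<^sup>2 + 2 * (e x - c x) * (S x - e x)) x
      = real_cond_exp M G (\<lambda>x. (S x - e x)\<^sup>2) x + real_cond_exp M G (\<lambda>x. 2 * (e x - c x) * (S x - e x)) x"
    by (rule real_cond_exp_add; intro I bdd_intros S be c)
  have 4: "AE x in M. real_cond_exp M G (\<lambda>x. 2 * (e x - c x) * (S x - e x)) x = 2 * (e x - c x) * real_cond_exp M G (\<lambda>x. S x - e x) x"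
  proof (rule real_cond_exp_mult)
    show "integrable M (\<lambda>x. 2 * (e x - c x) * (S x - e x))" by (intro I bdd_intros S be c)
  qed (intro borel_measurable_times borel_measurable_diff borel_measurable_const eG cG bdd_meas bdd_intros S be c)+
  have 5: "AE x in M. real_cond_exp M G (\<lambda>x. S x - e x) x = real_cond_exp M G S x - real_cond_exp M G e x"
    by (rule real_cond_exp_diff; intro I S be)
  have 6: "AE x in M. real_cond_exp M G e x = e x"
    by (rule real_cond_exp_F_meas) (intro I be, rule eG)
  have 7: "AE x in M. real_cond_exp M G (\<lambda>x. (e x - c x)\<^sup>2) x = (e x - c x)\<^sup>2"
    by (rule real_cond_exp_F_meas) (intro I bdd_intros be c, intro borel_measurable_power borel_measurable_diff eG cG)
  have 8: "AE x in M. real_cond_exp M G (\<lambda>x. (S x - c x)\<^sup>2) x \<le> K"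
    by (rule real_cond_exp_le_c) (intro I bdd_intros S c, rule K)
  have "AE x in M. real_cond_exp M G (\<lambda>x. (S x - e x)\<^sup>2) x \<le> K" using 1 2 3 4 5 6 7 8
  proof eventually_elim
    case (elim x)
    have "real_cond_exp M G (\<lambda>x. 2 * (e x - c x) * (S x - e x)) x = 0"
      using elim(4,5,6) unfolding e_def by simp
    then show ?case using elim(1,2,3,7,8) by (smt (verit) zero_le_power2)
  qed
  then show ?thesis unfolding cond_var_def e_def .
qed

lemma bdd_indicator: "A \<in> sets M \<Longrightarrow> bdd M (indicator A)"
  by (rule bdd_bound[where c=1]) (auto intro!: AE_I2 split: split_indicator)

lemma bdd_abs: "bdd M f \<Longrightarrow> bdd M (\<lambda>x. \<bar>f x\<bar>)"
  unfolding bdd_def by auto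

lemma binwise:
  fixes idx :: "'a \<Rightarrow> nat"
  assumes P: "prob_space M" and idx[measurable]: "idx \<in> measurable M (count_space UNIV)" and Z: "bdd M Z"
  shows "AE x in M. real_cond_exp M (gen M (count_space UNIV) idx) Z x =
     (\<integral>y. indicator {y\<in>space M. idx y = idx x} y * Z y \<partial>M) / measure M {y\<in>space M. idx y = idx x}"
proof -
  interpret prob_space M by fact
  define G where "G = gen M (count_space UNIV) idx"
  have G: "sigma_finite_subalgebra M G" unfolding G_def by (rule gen_sfs[OF P idx])
  interpret sigma_finite_subalgebra M G by fact
  have I: "bdd M f \<Longrightarrow> integrable M f" for f using bdd_integrable[OF P] .
  define Pi where "Pi i = {y\<in>space M. idx y = i}" for i
  have Pis[measurable]: "Pi i \<in> sets M" for i unfolding Pi_def by measurable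
  define k where "k i = (\<integral>y. indicator (Pi i) y * Z y \<partial>M) / measure M (Pi i)" for i
  define g where "g x = k (idx x)" for x
  have Zm[measurable]: "Z \<in> borel_measurable M" using Z bdd_meas by auto
  have idxG: "idx \<in> measurable G (count_space UNIV)" unfolding G_def by (rule gen_meas) simp
  have gG: "g \<in> borel_measurable G" unfolding g_def
    by (rule measurable_compose[OF idxG]) (simp add: measurable_count_space_eq1)
  have gM: "g \<in> borel_measurable M" unfolding g_def by measurable
  obtain c where c: "AE x in M. \<bar>Z x\<bar> \<le> c" using Z bdd_def by blast
  have kb: "\<bar>k i\<bar> \<le> max c 0" for i
  proof (cases "measure M (Pi i) = 0")
    case True then show ?thesis by (simp add: k_def)
  next
    case False
    then have mp: "measure M (Pi i) > 0" using measure_nonneg[of M "Pi i"] by linarith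
    have "\<bar>\<integral>y. indicator (Pi i) y * Z y \<partial>M\<bar> \<le> (\<integral>y. \<bar>indicator (Pi i) y * Z y\<bar> \<partial>M)"
      by (rule integral_abs_bound)
    also have "\<dots> \<le> (\<integral>y. max c 0 * indicator (Pi i) y \<partial>M)"
    proof (rule integral_mono_AE)
      show "integrable M (\<lambda>y. \<bar>indicator (Pi i) y * Z y\<bar>)"
        by (intro I bdd_intros bdd_abs bdd_indicator Pis Z)
      show "integrable M (\<lambda>y. max c 0 * indicator (Pi i) y)"
        by (intro I bdd_intros bdd_indicator Pis)
      show "AE y in M. \<bar>indicator (Pi i) y * Z y\<bar> \<le> max c 0 * indicator (Pi i) y"
        using c by eventually_elim (auto split: split_indicator)
    qed
    also have "\<dots> = max c 0 * measure M (Pi i)" by simp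
    finally show ?thesis unfolding k_def using mp by (simp add: divide_le_eq abs_divide)
  qed
  have bg: "bdd M g" by (rule bdd_bound[OF gM]) (auto simp: g_def intro!: AE_I2 kb)
  have "AE x in M. real_cond_exp M G Z x = g x"
  proof (rule real_cond_exp_charact)
    fix A assume A: "A \<in> sets G"
    have idxs: "idx \<in> space M \<rightarrow> space (count_space UNIV)" by simp
    obtain K where AK: "A = idx -` K \<inter> space M"
      using A unfolding G_def gen_def sets_vimage_algebra2[OF idxs] by auto
    define Ai where "Ai i = (if i \<in> K then Pi i else {})" for i
    have Ais[measurable]: "Ai i \<in> sets M" for i unfolding Ai_def by auto
    have Aun: "A = (\<Union>i. Ai i)" unfolding AK Ai_def Pi_def by auto
    have disj: "Ai i \<inter> Ai j = {}" if "i \<noteq> j" for i j using that unfolding Ai_def Pi_def by auto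
    have trm: "(LINT x:Ai i|M. Z x) = (LINT x:Ai i|M. g x)" for i
    proof (cases "i \<in> K")
      case False then show ?thesis by (simp add: Ai_def set_lebesgue_integral_def)
    next
      case True
      have "(LINT x:Ai i|M. g x) = (\<integral>x. k i * indicator (Pi i) x \<partial>M)"
        unfolding set_lebesgue_integral_def Ai_def using True
        by (intro Bochner_Integration.integral_cong) (auto simp: g_def Pi_def split: split_indicator)
      also have "\<dots> = k i * measure M (Pi i)" by simp
      also have "\<dots> = (\<integral>y. indicator (Pi i) y * Z y \<partial>M)"
      proof (cases "measure M (Pi i) = 0")
        case True
        have "Pi i \<in> null_sets M" using True by (simp add: null_setsI emeasure_eq_measure)
        then have "AE y in M. y \<notin> Pi i" by (rule AE_not_in)
        then have "(\<integral>y. indicator (Pi i) y * Z y \<partial>M) = (\<integral>y. 0 \<partial>M)"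
          by (intro integral_cong_AE) (auto elim!: eventually_mono)
        then show ?thesis using True by simp
      next
        case False then show ?thesis by (simp add: k_def)
      qed
      also have "\<dots> = (LINT x:Ai i|M. Z x)"
        unfolding set_lebesgue_integral_def Ai_def using True by simp
      finally show ?thesis by simp
    qed
    have "(LINT x:A|M. Z x) = (\<Sum>i. (LINT x:Ai i|M. Z x))" unfolding Aun
      by (rule lebesgue_integral_countable_add[OF Ais disj], assumption)
         (unfold set_integrable_def, rule integrable_mult_indicator, measurable, rule I[OF Z])
    also have "\<dots> = (\<Sum>i. (LINT x:Ai i|M. g x))" using trm by simp
    also have "\<dots> = (LINT x:A|M. g x)" unfolding Aun
      by (rule lebesgue_integral_countable_add[OF Ais disj, symmetric], assumption)
         (unfold set_integrable_def, rule integrable_mult_indicator, measurable, rule I[OF bg])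
    finally show "(LINT x:A|M. Z x) = (LINT x:A|M. g x)" .
  qed (auto intro!: I Z bg gG)
  then show ?thesis unfolding G_def g_def k_def Pi_def .
qed

locale binsetup =
  fixes M :: "'a measure" and S :: "'a \<Rightarrow> real" and B :: "nat \<Rightarrow> real set" and J :: "nat set"
  assumes P: "prob_space M" and Sm: "S \<in> borel_measurable M"
    and S01: "\<And>\<omega>. \<omega> \<in> space M \<Longrightarrow> 0 \<le> S \<omega> \<and> S \<omega> \<le> 1"
    and IP: "interval_partition B J"
begin

definition iota :: "real \<Rightarrow> nat" where "iota s = (THE j. j \<in> J \<and> s \<in> B j)"
definition idx :: "'a \<Rightarrow> nat" where "idx \<omega> = iota (S \<omega>)"
definition kk :: "nat \<Rightarrow> real" where
  "kk i = (\<integral>y. indicator {y\<in>space M. idx y = i} y * S y \<partial>M) / measure M {y\<in>space M. idx y = i}"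
definition GG where "GG = gen M (count_space UNIV) idx"
definition FF where "FF = bin_sigma M B J S"
definition SB where "SB = binned M B J S"

lemma disj: "j \<in> J \<Longrightarrow> j' \<in> J \<Longrightarrow> s \<in> B j \<Longrightarrow> s \<in> B j' \<Longrightarrow> j = j'"
  using IP unfolding interval_partition_def disjoint_family_on_def by blast

lemma Bsub: "j \<in> J \<Longrightarrow> B j \<subseteq> {0..1}"
  using IP unfolding interval_partition_def by blast

lemma cover: "s \<in> {0..1} \<Longrightarrow> \<exists>j\<in>J. s \<in> B j"
  using IP unfolding interval_partition_def by blast

lemma iota_eq: "j \<in> J \<Longrightarrow> s \<in> B j \<Longrightarrow> iota s = j"
  unfolding iota_def by (rule the_equality) (auto dest: disj)

lemma iota_in: "s \<in> {0..1} \<Longrightarrow> iota s \<in> J \<and> s \<in> B (iota s)"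
  using cover[of s] iota_eq by auto

lemma iota_out: "s \<notin> {0..1} \<Longrightarrow> iota s = (THE j::nat. False)"
proof -
  assume s: "s \<notin> {0..1}"
  have "(\<lambda>j. j \<in> J \<and> s \<in> B j) = (\<lambda>j. False)" using Bsub s by blast
  then show ?thesis unfolding iota_def by simp
qed

lemma iota_meas: "iota \<in> borel \<rightarrow>\<^sub>M count_space UNIV"
  unfolding measurable_count_space_eq2_countable
proof (intro conjI ballI)
  fix a :: nat
  have Ba: "a \<in> J \<Longrightarrow> B a \<in> sets borel"
    using IP unfolding interval_partition_def by (auto intro: real_interval_borel_measurable)
  have "iota -` {a} \<inter> space borel = (if a \<in> J then B a else {}) \<union> (if a = (THE j::nat. False) then - {0..1} else {})"
  proof (intro set_eqI iffI)
    fix s assume "s \<in> iota -` {a} \<inter> space borel"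
    then have "iota s = a" by simp
    then show "s \<in> (if a \<in> J then B a else {}) \<union> (if a = (THE j::nat. False) then - {0..1} else {})"
      using iota_in[of s] iota_out[of s] by (cases "s \<in> {0..1}") auto
  next
    fix s assume s: "s \<in> (if a \<in> J then B a else {}) \<union> (if a = (THE j::nat. False) then - {0..1} else {})"
    show "s \<in> iota -` {a} \<inter> space borel"
    proof (cases "s \<in> {0..1}")
      case True
      then have "a \<in> J \<and> s \<in> B a" using s by (auto split: if_splits)
      then show ?thesis using iota_eq by auto
    next
      case False
      have "\<not> (a \<in> J \<and> s \<in> B a)" using Bsub False by blast
      then have "a = (THE j::nat. False)" using s by (auto split: if_splits)
      then show ?thesis using iota_out[OF False] by auto
    qed
  qed
  then show "iota -` {a} \<inter> space borel \<in> sets borel" using Ba by auto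
qed auto

lemma idx_meas[measurable]: "idx \<in> M \<rightarrow>\<^sub>M count_space UNIV"
  unfolding idx_def by (rule measurable_compose[OF Sm iota_meas])

lemma S_in: "\<omega> \<in> space M \<Longrightarrow> S \<omega> \<in> {0..1}" using S01 by auto

lemma idx_in: "\<omega> \<in> space M \<Longrightarrow> idx \<omega> \<in> J \<and> S \<omega> \<in> B (idx \<omega>)"
  unfolding idx_def using iota_in S_in by blast

lemma binned_eq: "\<omega> \<in> space M \<Longrightarrow> SB \<omega> = kk (idx \<omega>)"
proof -
  assume w: "\<omega> \<in> space M"
  have j: "(THE j. j \<in> J \<and> S \<omega> \<in> B j) = idx \<omega>" unfolding idx_def iota_def ..
  have E: "{\<omega>' \<in> space M. S \<omega>' \<in> B (idx \<omega>)} = {y\<in>space M. idx y = idx \<omega>}"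
  proof (intro Collect_cong conj_cong refl iffI)
    fix y assume "y \<in> space M" "S y \<in> B (idx \<omega>)"
    then show "idx y = idx \<omega>" unfolding idx_def using iota_eq idx_in[OF w] by (simp add: idx_def)
  next
    fix y assume "y \<in> space M" "idx y = idx \<omega>"
    then show "S y \<in> B (idx \<omega>)" using idx_in by metis
  qed
  show ?thesis unfolding SB_def binned_def Let_def j E kk_def ..
qed

lemma SB_meas[measurable]: "SB \<in> borel_measurable M"
proof -
  have "(\<lambda>\<omega>. kk (idx \<omega>)) \<in> borel_measurable M" by measurable
  then show ?thesis by (rule measurable_cong[THEN iffD1, rotated]) (simp add: binned_eq)
qed

lemma GG_sfs: "sigma_finite_subalgebra M GG" unfolding GG_def by (rule gen_sfs[OF P idx_meas])
lemma GG_sub: "subalgebra M GG" unfolding GG_def by (rule gen_subalg[OF idx_meas])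
lemma FF_sfs: "sigma_finite_subalgebra M FF" unfolding FF_def bin_sigma_def by (rule gen_sfs[OF P SB_meas[unfolded SB_def]])
lemma FF_sub: "subalgebra M FF" unfolding FF_def bin_sigma_def by (rule gen_subalg[OF SB_meas[unfolded SB_def]])

lemma FF_eq_kidx: "FF = gen M borel (\<lambda>\<omega>. kk (idx \<omega>))"
  unfolding FF_def bin_sigma_def gen_def SB_def[symmetric]
  by (rule vimage_algebra_cong) (auto simp: binned_eq)

lemma FF_eq_kiS: "FF = gen M borel (\<lambda>\<omega>. (\<lambda>s. kk (iota s)) (S \<omega>))"
  unfolding FF_eq_kidx idx_def by simp

lemma GF_sub: "subalgebra GG FF"
  unfolding FF_eq_kidx GG_def by (rule gen_comp_sub) auto

lemma SigF_sub: "subalgebra (gen M borel S) FF"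
  unfolding FF_eq_kiS
proof (rule gen_comp_sub)
  show "S \<in> space M \<rightarrow> space borel" by simp
  show "(\<lambda>s. kk (iota s)) \<in> borel_measurable borel"
    by (rule measurable_compose[OF iota_meas]) simp
qed

lemma SB_FF: "SB \<in> borel_measurable FF"
  unfolding FF_def bin_sigma_def SB_def by (rule gen_meas) simp

lemma I: "bdd M f \<Longrightarrow> integrable M f" using bdd_integrable[OF P] .

lemma bS: "bdd M S"
  by (rule bdd_bound[OF Sm, where c=1]) (auto intro!: AE_I2 dest: S01)

lemma SB_G: "AE x in M. real_cond_exp M GG S x = SB x"
proof -
  have "AE x in M. real_cond_exp M GG S x = (\<integral>y. indicator {y\<in>space M. idx y = idx x} y * S y \<partial>M) / measure M {y\<in>space M. idx y = idx x}"
    unfolding GG_def by (rule binwise[OF P idx_meas bS])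
  moreover have "AE x in M. x \<in> space M" by (rule AE_space)
  ultimately show ?thesis by eventually_elim (simp add: binned_eq kk_def)
qed

lemma bSB: "bdd M SB"
  by (rule bdd_AE[OF bdd_cond_exp[OF GG_sfs P bS] SB_meas SB_G])

lemma SB_F: "AE x in M. real_cond_exp M FF S x = SB x"
proof -
  interpret sigma_finite_subalgebra M FF by (rule FF_sfs)
  have 1: "AE x in M. real_cond_exp M FF (real_cond_exp M GG S) x = real_cond_exp M FF S x"
    by (rule real_cond_exp_nested_subalg[OF GG_sub GF_sub I[OF bS]])
  have 2: "AE x in M. real_cond_exp M FF (real_cond_exp M GG S) x = real_cond_exp M FF SB x"
    by (rule real_cond_exp_cong[OF SB_G]) (auto intro: SB_meas)
  have 3: "AE x in M. real_cond_exp M FF SB x = SB x"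
    by (rule real_cond_exp_F_meas[OF I[OF bSB] SB_FF])
  show ?thesis using 1 2 3 by eventually_elim simp
qed

end

lemma eq_bins_bounds:
  assumes "s \<in> eq_bins n j"
  shows "real j / real n \<le> s \<and> s \<le> real (j + 1) / real n"
  using assms unfolding eq_bins_def by (auto split: if_splits)

lemma eq_bins_partition:
  assumes n: "n \<ge> 1"
  shows "interval_partition (eq_bins n) {..<n}"
  unfolding interval_partition_def
proof (intro conjI ballI)
  fix j assume j: "j \<in> {..<n}"
  have npos: "real n > 0" using n by simp
  have lt: "real j / real n < real (j + 1) / real n" using npos by (simp add: divide_strict_right_mono)
  show "eq_bins n j \<noteq> {}"
    using lt unfolding eq_bins_def by (auto intro!: exI[of _ "real j / real n"])
  show "is_interval (eq_bins n j)"
    unfolding eq_bins_def is_interval_1 by auto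
next
  have npos: "real n > 0" using n by simp
  show "disjoint_family_on (eq_bins n) {..<n}"
    unfolding disjoint_family_on_def
  proof (intro ballI impI)
    fix i j assume i: "i \<in> {..<n}" and j: "j \<in> {..<n}" and ij: "i \<noteq> j"
    have key: "eq_bins n a \<inter> eq_bins n b = {}" if ab: "a < b" "b < n" for a b
    proof -
      have "a + 1 < n" using ab by simp
      then have A: "eq_bins n a = {real a / real n ..< real (a + 1) / real n}" unfolding eq_bins_def by simp
      have "real (a + 1) / real n \<le> real b / real n" using ab npos by (intro divide_right_mono) auto
      then show ?thesis using A eq_bins_bounds[of _ n b] by fastforce
    qed
    show "eq_bins n i \<inter> eq_bins n j = {}"
      using key[of i j] key[of j i] i j ij by (cases "i < j") (auto simp: Int_commute)
  qed
next
  have npos: "real n > 0" using n by simp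
  show "(\<Union>j\<in>{..<n}. eq_bins n j) = {0..1}"
  proof (intro equalityI subsetI)
    fix s :: real assume "s \<in> (\<Union>j\<in>{..<n}. eq_bins n j)"
    then obtain j where j: "j < n" "s \<in> eq_bins n j" by auto
    have u: "real (j + 1) / real n \<le> 1" using j npos by (simp add: divide_le_eq)
    have z: "0 \<le> real j / real n" by simp
    have b: "real j / real n \<le> s \<and> s \<le> real (j + 1) / real n" using eq_bins_bounds[OF j(2)] .
    show "s \<in> {0..1}" unfolding atLeastAtMost_iff using u z b by linarith
  next
    fix s :: real assume s: "s \<in> {0..1}"
    define j where "j = min (nat \<lfloor>real n * s\<rfloor>) (n - 1)"
    have jn: "j < n" using n unfolding j_def by auto
    have fl0: "\<lfloor>real n * s\<rfloor> \<ge> 0" using s by auto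
    have lo: "real j \<le> real n * s"
    proof -
      have "real j \<le> real (nat \<lfloor>real n * s\<rfloor>)" unfolding j_def by simp
      also have "\<dots> = of_int \<lfloor>real n * s\<rfloor>" using fl0 by simp
      also have "\<dots> \<le> real n * s" by simp
      finally show ?thesis .
    qed
    have "s \<in> eq_bins n j"
    proof (cases "j + 1 < n")
      case True
      then have "j = nat \<lfloor>real n * s\<rfloor>" unfolding j_def by auto
      then have "real n * s < real j + 1" using fl0 by linarith
      then have "s < real (j + 1) / real n" using npos by (simp add: field_simps)
      moreover have "real j / real n \<le> s" using lo npos by (simp add: field_simps)
      ultimately show ?thesis unfolding eq_bins_def using True by simp
    next
      case False
      then have "j + 1 = n" using jn by simp
      then have "real (j + 1) / real n = 1" using npos by simp
      moreover have "real j / real n \<le> s" using lo npos by (simp add: field_simps)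
      ultimately show ?thesis unfolding eq_bins_def using False s by simp
    qed
    then show "s \<in> (\<Union>j\<in>{..<n}. eq_bins n j)" using jn by auto
  qed
qed

lemma cond_var_01:
  assumes P: "prob_space M" and F: "sigma_finite_subalgebra M F" and C: "bdd M C"
    and C01: "AE x in M. 0 \<le> C x \<and> C x \<le> 1"
  shows "AE x in M. cond_var M F C x \<le> real_cond_exp M F C x * (1 - real_cond_exp M F C x)"
proof -
  interpret sigma_finite_subalgebra M F by fact
  define e where "e = real_cond_exp M F C"
  have I: "bdd M f \<Longrightarrow> integrable M f" for f using bdd_integrable[OF P] .
  have be: "bdd M e" unfolding e_def by (rule bdd_cond_exp[OF F P C])
  have eF: "e \<in> borel_measurable F" unfolding e_def by simp
  have 1: "AE x in M. real_cond_exp M F (\<lambda>x. (C x - e x)\<^sup>2) x \<le> real_cond_exp M F (\<lambda>x. (C x - 2 * e x * C x) + (e x)\<^sup>2) x"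
  proof (rule real_cond_exp_mono)
    show "AE x in M. (C x - e x)\<^sup>2 \<le> C x - 2 * e x * C x + (e x)\<^sup>2" using C01
    proof eventually_elim
      case (elim x)
      have "(C x)\<^sup>2 \<le> C x" using elim mult_left_le[of "C x" "C x"] by (simp add: power2_eq_square)
      then show ?case by (simp add: power2_eq_square algebra_simps)
    qed
  qed (intro I bdd_intros C be)+
  have 2: "AE x in M. real_cond_exp M F (\<lambda>x. (C x - 2 * e x * C x) + (e x)\<^sup>2) x
     = real_cond_exp M F (\<lambda>x. C x - 2 * e x * C x) x + real_cond_exp M F (\<lambda>x. (e x)\<^sup>2) x"
    by (rule real_cond_exp_add; intro I bdd_intros C be)
  have 3: "AE x in M. real_cond_exp M F (\<lambda>x. C x - 2 * e x * C x) x
     = real_cond_exp M F C x - real_cond_exp M F (\<lambda>x. 2 * e x * C x) x"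
    by (rule real_cond_exp_diff; intro I bdd_intros C be)
  have 4: "AE x in M. real_cond_exp M F (\<lambda>x. 2 * e x * C x) x = 2 * e x * real_cond_exp M F C x"
  proof (rule real_cond_exp_mult)
    show "integrable M (\<lambda>x. 2 * e x * C x)" by (intro I bdd_intros C be)
  qed (intro borel_measurable_times borel_measurable_const eF bdd_meas C)+
  have 5: "AE x in M. real_cond_exp M F (\<lambda>x. (e x)\<^sup>2) x = (e x)\<^sup>2"
    by (rule real_cond_exp_F_meas) (intro I bdd_intros be, intro borel_measurable_power eF)
  show ?thesis using 1 2 3 4 5
  proof eventually_elim
    case (elim x)
    then show ?case unfolding cond_var_def e_def[symmetric] by (simp add: power2_eq_square algebra_simps)
  qed
qed

context binsetup begin

lemma var_bound_eq:
  assumes n: "n \<ge> 1" and BJ: "B = eq_bins n" "J = {..<n}"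
  shows "AE x in M. cond_var M FF S x \<le> 1 / (4 * (real n)\<^sup>2)"
proof -
  have npos: "real n > 0" using n by simp
  define K where "K = 1 / (4 * (real n)\<^sup>2)"
  define mid where "mid \<omega> = (2 * real (idx \<omega>) + 1) / (2 * real n)" for \<omega>
  have idxG: "idx \<in> measurable GG (count_space UNIV)" unfolding GG_def by (rule gen_meas) simp
  have midG: "mid \<in> borel_measurable GG" unfolding mid_def
    by (rule measurable_compose[OF idxG, where g="\<lambda>i. (2 * real i + 1) / (2 * real n)"]) simp
  have midM: "mid \<in> borel_measurable M" unfolding mid_def by measurable
  have idxn: "\<omega> \<in> space M \<Longrightarrow> idx \<omega> < n \<and> S \<omega> \<in> eq_bins n (idx \<omega>)" for \<omega>
    using idx_in[of \<omega>] BJ by auto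
  have bmid: "bdd M mid"
  proof (rule bdd_bound[OF midM, where c=1])
    show "AE x in M. \<bar>mid x\<bar> \<le> 1"
    proof (rule AE_I2)
      fix x assume x: "x \<in> space M"
      have "2 * real (idx x) + 1 \<le> 2 * real n" using idxn[OF x] by linarith
      then show "\<bar>mid x\<bar> \<le> 1" unfolding mid_def using npos by (simp add: divide_le_eq)
    qed
  qed
  have sq: "AE x in M. (S x - mid x)\<^sup>2 \<le> K"
  proof (rule AE_I2)
    fix x assume x: "x \<in> space M"
    have b: "real (idx x) / real n \<le> S x \<and> S x \<le> real (idx x + 1) / real n"
      using eq_bins_bounds idxn[OF x] by blast
    have "\<bar>S x - mid x\<bar> \<le> 1 / (2 * real n)"
      using b npos unfolding mid_def by (simp add: abs_le_iff field_simps)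
    then have "(S x - mid x)\<^sup>2 \<le> (1 / (2 * real n))\<^sup>2"
      by (metis abs_ge_zero power2_abs power_mono)
    then show "(S x - mid x)\<^sup>2 \<le> K" unfolding K_def by (simp add: power2_eq_square)
  qed
  have vG: "AE x in M. cond_var M GG S x \<le> K"
    by (rule cond_var_le[OF P GG_sfs bS bmid midG sq])
  interpret sigma_finite_subalgebra M FF by (rule FF_sfs)
  have SBm: "SB \<in> borel_measurable M" by (rule SB_meas)
  have a: "AE x in M. cond_var M FF S x = real_cond_exp M FF (\<lambda>x. (S x - SB x)\<^sup>2) x"
    unfolding cond_var_def
  proof (rule real_cond_exp_cong)
    show "AE x in M. (S x - real_cond_exp M FF S x)\<^sup>2 = (S x - SB x)\<^sup>2"
      using SB_F by eventually_elim simp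
  qed (intro bdd_meas bdd_intros bS bSB bdd_cond_exp[OF FF_sfs P bS])+
  have b: "AE x in M. real_cond_exp M FF (real_cond_exp M GG (\<lambda>x. (S x - SB x)\<^sup>2)) x = real_cond_exp M FF (\<lambda>x. (S x - SB x)\<^sup>2) x"
    by (rule real_cond_exp_nested_subalg[OF GG_sub GF_sub]) (intro I bdd_intros bS bSB)
  have c: "AE x in M. real_cond_exp M GG (\<lambda>x. (S x - SB x)\<^sup>2) x = cond_var M GG S x"
    unfolding cond_var_def
  proof (rule sigma_finite_subalgebra.real_cond_exp_cong[OF GG_sfs])
    show "AE x in M. (S x - SB x)\<^sup>2 = (S x - real_cond_exp M GG S x)\<^sup>2"
      using SB_G by eventually_elim simp
  qed (intro bdd_meas bdd_intros bS bSB bdd_cond_exp[OF GG_sfs P bS])+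
  have d: "AE x in M. real_cond_exp M FF (real_cond_exp M GG (\<lambda>x. (S x - SB x)\<^sup>2)) x \<le> K"
  proof (rule real_cond_exp_le_c)
    show "integrable M (real_cond_exp M GG (\<lambda>x. (S x - SB x)\<^sup>2))"
      by (intro I bdd_cond_exp[OF GG_sfs P] bdd_intros bS bSB)
    show "AE x in M. real_cond_exp M GG (\<lambda>x. (S x - SB x)\<^sup>2) x \<le> K"
      using c vG by eventually_elim simp
  qed
  show ?thesis using a b d unfolding K_def[symmetric] by eventually_elim simp
qed

end

lemma part123:
  fixes M :: "'a measure" and S Q :: "'a \<Rightarrow> real" and Rw :: "'a \<Rightarrow> nat" and B :: "nat \<Rightarrow> real set" and J :: "nat set"
  assumes P: "prob_space M" and Sm: "S \<in> borel_measurable M" and S01: "\<And>\<omega>. \<omega> \<in> space M \<Longrightarrow> 0 \<le> S \<omega> \<and> S \<omega> \<le> 1"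
    and bQ: "bdd M Q" and Q01: "AE x in M. 0 \<le> Q x \<and> Q x \<le> 1" and Rwm: "Rw \<in> measurable M (count_space UNIV)"
    and IP: "interval_partition B J"
  shows "MSE M S Q = CL M S Q + GL M S Q
    \<and> CL M S Q + GL M S Q \<ge> ece_B M B J S Q + GL_lower M B J S Q Rw
           - (\<integral>\<omega>. sqrt (cond_var M (bin_sigma M B J S) S \<omega>) *
                 (2 * sqrt (cond_var M (bin_sigma M B J S) (calib M S Q) \<omega>)
                    - sqrt (cond_var M (bin_sigma M B J S) S \<omega>)) \<partial>M)
    \<and> ece_B M B J S Q + GL_lower M B J S Q Rw
           - (\<integral>\<omega>. sqrt (cond_var M (bin_sigma M B J S) S \<omega>) *
                 (2 * sqrt (cond_var M (bin_sigma M B J S) (calib M S Q) \<omega>)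
                    - sqrt (cond_var M (bin_sigma M B J S) S \<omega>)) \<partial>M)
         \<ge> ece_B M B J S Q + GL_lower M B J S Q Rw
           - (\<integral>\<omega>. sqrt (cond_var M (bin_sigma M B J S) S \<omega>) *
                 (2 * sqrt (bin_calib M B J S Q \<omega> * (1 - bin_calib M B J S Q \<omega>))
                    - sqrt (cond_var M (bin_sigma M B J S) S \<omega>)) \<partial>M)"
proof -
  interpret bs: binsetup M S B J by (rule binsetup.intro[OF P Sm S01 IP])
  have I: "bdd M f \<Longrightarrow> integrable M f" for f using bdd_integrable[OF P] .
  define Sig where "Sig = gen M borel S"
  have sfsSig: "sigma_finite_subalgebra M Sig" unfolding Sig_def by (rule gen_sfs[OF P Sm])
  have subSig: "subalgebra M Sig" unfolding Sig_def by (rule gen_subalg[OF Sm])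
  have SSig: "S \<in> borel_measurable Sig" unfolding Sig_def by (rule gen_meas) simp
  define C where "C = calib M S Q"
  have C_eq: "C = real_cond_exp M Sig Q" unfolding C_def calib_def Sig_def ..
  define F where "F = bin_sigma M B J S"
  have F_eq: "F = bs.FF" unfolding F_def bs.FF_def ..
  have sfsF: "sigma_finite_subalgebra M F" unfolding F_eq by (rule bs.FF_sfs)
  have SigF: "subalgebra Sig F" unfolding F_eq Sig_def by (rule bs.SigF_sub)
  define SB where "SB = binned M B J S"
  define CB where "CB = bin_calib M B J S Q"
  have CB_eq: "CB = real_cond_exp M F Q" unfolding CB_def bin_calib_def F_def ..
  define H where "H = gen M (borel \<Otimes>\<^sub>M count_space UNIV) (\<lambda>\<omega>'. (binned M B J S \<omega>', Rw \<omega>'))"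
  have pm: "(\<lambda>\<omega>'. (binned M B J S \<omega>', Rw \<omega>')) \<in> M \<rightarrow>\<^sub>M (borel \<Otimes>\<^sub>M count_space UNIV)"
    by (rule measurable_Pair[OF bs.SB_meas[unfolded bs.SB_def] Rwm])
  have sfsH: "sigma_finite_subalgebra M H" unfolding H_def by (rule gen_sfs[OF P pm])
  have HF: "subalgebra H F"
  proof -
    have "subalgebra H (gen M borel (\<lambda>\<omega>. fst (binned M B J S \<omega>, Rw \<omega>)))"
      unfolding H_def by (rule gen_comp_sub) (auto simp: space_pair_measure)
    then show ?thesis unfolding F_def bin_sigma_def by simp
  qed
  define QH where "QH = real_cond_exp M H Q"
  have bS: "bdd M S" by (rule bs.bS)
  have bC: "bdd M C" unfolding C_eq by (rule bdd_cond_exp[OF sfsSig P bQ])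
  have bCB: "bdd M CB" unfolding CB_eq by (rule bdd_cond_exp[OF sfsF P bQ])
  have bQH: "bdd M QH" unfolding QH_def by (rule bdd_cond_exp[OF sfsH P bQ])
  have bSB: "bdd M SB" unfolding SB_def using bs.bSB unfolding bs.SB_def .
  have CB_F: "CB \<in> borel_measurable F" unfolding CB_eq by simp
  have CB_Sig: "CB \<in> borel_measurable Sig" by (rule measurable_from_subalg[OF SigF CB_F])
  have CB_H: "CB \<in> borel_measurable H" by (rule measurable_from_subalg[OF HF CB_F])
  have EFC: "AE x in M. real_cond_exp M F C x = CB x" unfolding C_eq CB_eq
    by (rule sigma_finite_subalgebra.real_cond_exp_nested_subalg[OF sfsF subSig SigF I[OF bQ]])
  have EFQH: "AE x in M. real_cond_exp M F QH x = CB x" unfolding QH_def CB_eq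
    by (rule sigma_finite_subalgebra.real_cond_exp_nested_subalg[OF sfsF gen_subalg[OF pm, folded H_def] HF I[OF bQ]])
  have EFS: "AE x in M. real_cond_exp M F S x = SB x"
    using bs.SB_F unfolding F_eq SB_def bs.SB_def .
  have C01: "AE x in M. 0 \<le> C x \<and> C x \<le> 1"
  proof -
    have "AE x in M. C x \<ge> 0" unfolding C_eq
      by (rule sigma_finite_subalgebra.real_cond_exp_ge_c[OF sfsSig I[OF bQ]]) (use Q01 in \<open>eventually_elim, simp\<close>)
    moreover have "AE x in M. C x \<le> 1" unfolding C_eq
      by (rule sigma_finite_subalgebra.real_cond_exp_le_c[OF sfsSig I[OF bQ]]) (use Q01 in \<open>eventually_elim, simp\<close>)
    ultimately show ?thesis by eventually_elim simp
  qed
  have c1: "MSE M S Q = CL M S Q + GL M S Q"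
  proof -
    have "MSE M S Q = (\<integral>x. (Q x - S x)\<^sup>2 \<partial>M)" unfolding MSE_def by (simp add: power2_commute)
    also have "\<dots> = (\<integral>x. (Q x - C x)\<^sup>2 \<partial>M) + (\<integral>x. (C x - S x)\<^sup>2 \<partial>M)"
      unfolding C_eq by (rule pyth[OF P sfsSig bQ bS SSig])
    also have "\<dots> = CL M S Q + GL M S Q"
      unfolding CL_def GL_def C_def by (simp add: power2_commute)
    finally show ?thesis .
  qed
  define a where "a x = S x - real_cond_exp M F S x" for x
  define b where "b x = C x - real_cond_exp M F C x" for x
  define cvS where "cvS = cond_var M F S"
  define cvC where "cvC = cond_var M F C"
  have cvS_eq: "cvS = real_cond_exp M F (\<lambda>x. (a x)\<^sup>2)" unfolding cvS_def cond_var_def a_def ..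
  have cvC_eq: "cvC = real_cond_exp M F (\<lambda>x. (b x)\<^sup>2)" unfolding cvC_def cond_var_def b_def ..
  have ba: "bdd M a" unfolding a_def by (intro bdd_intros bS bdd_cond_exp[OF sfsF P bS])
  have bb: "bdd M b" unfolding b_def by (intro bdd_intros bC bdd_cond_exp[OF sfsF P bC])
  have bcvS: "bdd M cvS" unfolding cvS_eq by (intro bdd_cond_exp[OF sfsF P] bdd_intros ba)
  have bcvC: "bdd M cvC" unfolding cvC_eq by (intro bdd_cond_exp[OF sfsF P] bdd_intros bb)
  have cvS0: "AE x in M. cvS x \<ge> 0" unfolding cvS_eq
    by (rule sigma_finite_subalgebra.real_cond_exp_pos[OF sfsF]) (auto intro: bdd_meas[OF bdd_sq[OF ba]])
  have int_cvS: "(\<integral>x. cvS x \<partial>M) = (\<integral>x. (a x)\<^sup>2 \<partial>M)" unfolding cvS_eq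
    by (rule sigma_finite_subalgebra.real_cond_exp_int(2)[OF sfsF I[OF bdd_sq[OF ba]]])
  have int_cvC: "(\<integral>x. cvC x \<partial>M) = (\<integral>x. (b x)\<^sup>2 \<partial>M)" unfolding cvC_eq
    by (rule sigma_finite_subalgebra.real_cond_exp_int(2)[OF sfsF I[OF bdd_sq[OF bb]]])
  have csab: "(\<integral>x. a x * b x \<partial>M) \<le> (\<integral>x. sqrt (cvS x) * sqrt (cvC x) \<partial>M)"
    unfolding cvS_eq cvC_eq by (rule cs[OF P sfsF ba bb])
  have EFSC: "AE x in M. real_cond_exp M F (\<lambda>x. S x - C x) x = SB x - CB x"
  proof -
    have "AE x in M. real_cond_exp M F (\<lambda>x. S x - C x) x = real_cond_exp M F S x - real_cond_exp M F C x"
      by (rule sigma_finite_subalgebra.real_cond_exp_diff[OF sfsF I[OF bS] I[OF bC]])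
    then show ?thesis using EFS EFC by eventually_elim simp
  qed
  have bEFSC: "bdd M (real_cond_exp M F (\<lambda>x. S x - C x))" by (intro bdd_cond_exp[OF sfsF P] bdd_intros bS bC)
  have p1: "(\<integral>x. (S x - C x - 0)\<^sup>2 \<partial>M) = (\<integral>x. (S x - C x - real_cond_exp M F (\<lambda>x. S x - C x) x)\<^sup>2 \<partial>M)
      + (\<integral>x. (real_cond_exp M F (\<lambda>x. S x - C x) x - 0)\<^sup>2 \<partial>M)"
    by (rule pyth[OF P sfsF bdd_diff[OF bS bC] bdd_const]) simp
  have CL_eq: "CL M S Q = (\<integral>x. (S x - C x - 0)\<^sup>2 \<partial>M)" unfolding CL_def C_def by simp
  have ece_eq: "(\<integral>x. (real_cond_exp M F (\<lambda>x. S x - C x) x - 0)\<^sup>2 \<partial>M) = ece_B M B J S Q"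
    unfolding ece_B_def SB_def[symmetric] CB_def[symmetric]
  proof (rule integral_cong_AE)
    show "AE x in M. (real_cond_exp M F (\<lambda>x. S x - C x) x - 0)\<^sup>2 = (SB x - CB x)\<^sup>2"
      using EFSC by eventually_elim simp
  qed (intro bdd_meas bdd_intros bSB bCB bEFSC)+
  have ab_eq: "(\<integral>x. (S x - C x - real_cond_exp M F (\<lambda>x. S x - C x) x)\<^sup>2 \<partial>M) = (\<integral>x. (a x - b x)\<^sup>2 \<partial>M)"
  proof (rule integral_cong_AE)
    have "AE x in M. real_cond_exp M F (\<lambda>x. S x - C x) x = real_cond_exp M F S x - real_cond_exp M F C x"
      by (rule sigma_finite_subalgebra.real_cond_exp_diff[OF sfsF I[OF bS] I[OF bC]])
    then show "AE x in M. (S x - C x - real_cond_exp M F (\<lambda>x. S x - C x) x)\<^sup>2 = (a x - b x)\<^sup>2"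
    proof eventually_elim
      case (elim x)
      have "S x - C x - real_cond_exp M F (\<lambda>x. S x - C x) x = a x - b x"
        unfolding elim a_def b_def by simp
      then show ?case by simp
    qed
  qed (intro bdd_meas bdd_intros bS bC bEFSC ba bb)+
  have ab_exp: "(\<integral>x. (a x - b x)\<^sup>2 \<partial>M) = (\<integral>x. (a x)\<^sup>2 \<partial>M) + (\<integral>x. (b x)\<^sup>2 \<partial>M) - 2 * (\<integral>x. a x * b x \<partial>M)"
  proof -
    have "(\<integral>x. (a x - b x)\<^sup>2 \<partial>M) = (\<integral>x. ((a x)\<^sup>2 + (b x)\<^sup>2) - 2 * (a x * b x) \<partial>M)"
      by (simp add: power2_eq_square algebra_simps)
    also have "\<dots> = (\<integral>x. (a x)\<^sup>2 + (b x)\<^sup>2 \<partial>M) - (\<integral>x. 2 * (a x * b x) \<partial>M)"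
      by (rule Bochner_Integration.integral_diff; intro I bdd_intros ba bb)
    also have "(\<integral>x. (a x)\<^sup>2 + (b x)\<^sup>2 \<partial>M) = (\<integral>x. (a x)\<^sup>2 \<partial>M) + (\<integral>x. (b x)\<^sup>2 \<partial>M)"
      by (rule Bochner_Integration.integral_add; intro I bdd_intros ba bb)
    finally show ?thesis by simp
  qed
  have b2: "(\<integral>x. (b x)\<^sup>2 \<partial>M) = (\<integral>x. (C x - CB x)\<^sup>2 \<partial>M)"
  proof (rule integral_cong_AE)
    show "AE x in M. (b x)\<^sup>2 = (C x - CB x)\<^sup>2"
      using EFC by eventually_elim (simp add: b_def)
  qed (intro bdd_meas bdd_intros bb bC bCB)+
  have p2: "(\<integral>x. (Q x - CB x)\<^sup>2 \<partial>M) = (\<integral>x. (Q x - C x)\<^sup>2 \<partial>M) + (\<integral>x. (C x - CB x)\<^sup>2 \<partial>M)"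
    unfolding C_eq by (rule pyth[OF P sfsSig bQ bCB CB_Sig])
  have p3: "(\<integral>x. (Q x - CB x)\<^sup>2 \<partial>M) = (\<integral>x. (Q x - QH x)\<^sup>2 \<partial>M) + (\<integral>x. (QH x - CB x)\<^sup>2 \<partial>M)"
    unfolding QH_def by (rule pyth[OF P sfsH bQ bCB CB_H])
  have p3': "(\<integral>x. (Q x - QH x)\<^sup>2 \<partial>M) \<ge> 0" by (rule integral_nonneg_AE) simp
  have GLl: "GL_lower M B J S Q Rw = (\<integral>x. (QH x - CB x)\<^sup>2 \<partial>M)"
  proof -
    have "GL_lower M B J S Q Rw = (\<integral>x. cond_var M F QH x \<partial>M)"
      unfolding GL_lower_def F_def[symmetric] H_def[symmetric] QH_def ..
    also have "\<dots> = (\<integral>x. (QH x - real_cond_exp M F QH x)\<^sup>2 \<partial>M)" unfolding cond_var_def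
      by (rule sigma_finite_subalgebra.real_cond_exp_int(2)[OF sfsF I]) (intro bdd_intros bQH bdd_cond_exp[OF sfsF P bQH])
    also have "\<dots> = (\<integral>x. (QH x - CB x)\<^sup>2 \<partial>M)"
    proof (rule integral_cong_AE)
      show "AE x in M. (QH x - real_cond_exp M F QH x)\<^sup>2 = (QH x - CB x)\<^sup>2"
        using EFQH by eventually_elim simp
    qed (intro bdd_meas bdd_intros bQH bCB bdd_cond_exp[OF sfsF P bQH])+
    finally show ?thesis .
  qed
  have GL_eq: "GL M S Q = (\<integral>x. (Q x - C x)\<^sup>2 \<partial>M)" unfolding GL_def C_def by (simp add: power2_commute)
  have sq_int: "(\<integral>x. sqrt (cvS x) * (2 * sqrt (cvC x) - sqrt (cvS x)) \<partial>M) = 2 * (\<integral>x. sqrt (cvS x) * sqrt (cvC x) \<partial>M) - (\<integral>x. cvS x \<partial>M)"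
  proof -
    have "(\<integral>x. sqrt (cvS x) * (2 * sqrt (cvC x) - sqrt (cvS x)) \<partial>M) = (\<integral>x. 2 * (sqrt (cvS x) * sqrt (cvC x)) - cvS x \<partial>M)"
    proof (rule integral_cong_AE)
      show "AE x in M. sqrt (cvS x) * (2 * sqrt (cvC x) - sqrt (cvS x)) = 2 * (sqrt (cvS x) * sqrt (cvC x)) - cvS x"
        using cvS0 by eventually_elim (simp add: algebra_simps)
    qed (intro bdd_meas bdd_intros bcvS bcvC)+
    also have "\<dots> = (\<integral>x. 2 * (sqrt (cvS x) * sqrt (cvC x)) \<partial>M) - (\<integral>x. cvS x \<partial>M)"
      by (rule Bochner_Integration.integral_diff; intro I bdd_intros bcvS bcvC)
    finally show ?thesis by simp
  qed
  have c2: "CL M S Q + GL M S Q \<ge> ece_B M B J S Q + GL_lower M B J S Q Rw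
           - (\<integral>\<omega>. sqrt (cvS \<omega>) * (2 * sqrt (cvC \<omega>) - sqrt (cvS \<omega>)) \<partial>M)"
    unfolding sq_int CL_eq p1 ab_eq ab_exp ece_eq GLl GL_eq
    using int_cvS int_cvC b2 p2 p3 p3' csab by linarith
  have cvC_le: "AE x in M. cvC x \<le> CB x * (1 - CB x)"
    using cond_var_01[OF P sfsF bC C01] EFC unfolding cvC_def by eventually_elim simp
  have c3: "(\<integral>\<omega>. sqrt (cvS \<omega>) * (2 * sqrt (cvC \<omega>) - sqrt (cvS \<omega>)) \<partial>M)
       \<le> (\<integral>\<omega>. sqrt (cvS \<omega>) * (2 * sqrt (CB \<omega> * (1 - CB \<omega>)) - sqrt (cvS \<omega>)) \<partial>M)"
  proof (rule integral_mono_AE)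
    show "AE x in M. sqrt (cvS x) * (2 * sqrt (cvC x) - sqrt (cvS x)) \<le> sqrt (cvS x) * (2 * sqrt (CB x * (1 - CB x)) - sqrt (cvS x))"
      using cvS0 cvC_le
    proof eventually_elim
      case (elim x)
      have "sqrt (cvC x) \<le> sqrt (CB x * (1 - CB x))" using elim by simp
      then show ?case using elim by (intro mult_left_mono) auto
    qed
  qed (intro I bdd_intros bcvS bcvC bCB)+
  show ?thesis using c1 c2 c3 unfolding cvS_def cvC_def F_def C_def CB_def by linarith
qed

lemma part4:
  fixes M :: "'a measure" and S Q :: "'a \<Rightarrow> real" and Rw :: "'a \<Rightarrow> nat" and n :: nat
  assumes P: "prob_space M" and Sm: "S \<in> borel_measurable M" and S01: "\<And>\<omega>. \<omega> \<in> space M \<Longrightarrow> 0 \<le> S \<omega> \<and> S \<omega> \<le> 1"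
    and bQ: "bdd M Q" and Q01: "AE x in M. 0 \<le> Q x \<and> Q x \<le> 1" and Rwm: "Rw \<in> measurable M (count_space UNIV)"
    and n: "n \<ge> 1"
  shows "MSE M S Q \<ge> ece_B M (eq_bins n) {..<n} S Q + GL_lower M (eq_bins n) {..<n} S Q Rw
             - 1 / real n * (\<integral>\<omega>. sqrt (bin_calib M (eq_bins n) {..<n} S Q \<omega>
                                  * (1 - bin_calib M (eq_bins n) {..<n} S Q \<omega>)) \<partial>M)"
proof -
  have IP: "interval_partition (eq_bins n) {..<n}" by (rule eq_bins_partition[OF n])
  note pp = part123[OF P Sm S01 bQ Q01 Rwm IP]
  interpret bs: binsetup M S "eq_bins n" "{..<n}" by (rule binsetup.intro[OF P Sm S01 IP])
  have I: "bdd M f \<Longrightarrow> integrable M f" for f using bdd_integrable[OF P] .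
  define F where "F = bin_sigma M (eq_bins n) {..<n} S"
  define CB where "CB = bin_calib M (eq_bins n) {..<n} S Q"
  define cvS where "cvS = cond_var M F S"
  have sfsF: "sigma_finite_subalgebra M F" unfolding F_def using bs.FF_sfs unfolding bs.FF_def .
  have CB_eq: "CB = real_cond_exp M F Q" unfolding CB_def bin_calib_def F_def ..
  have bS: "bdd M S" by (rule bs.bS)
  have bCB: "bdd M CB" unfolding CB_eq by (rule bdd_cond_exp[OF sfsF P bQ])
  have bEFS: "bdd M (real_cond_exp M F S)" by (rule bdd_cond_exp[OF sfsF P bS])
  have bcvS: "bdd M cvS" unfolding cvS_def cond_var_def by (intro bdd_cond_exp[OF sfsF P] bdd_intros bS bEFS)
  have vb: "AE x in M. cvS x \<le> 1 / (4 * (real n)\<^sup>2)"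
    using bs.var_bound_eq[OF n refl refl] unfolding cvS_def F_def bs.FF_def .
  have cvS0: "AE x in M. cvS x \<ge> 0" unfolding cvS_def cond_var_def
    by (rule sigma_finite_subalgebra.real_cond_exp_pos[OF sfsF]) (auto intro: bdd_meas[OF bdd_sq[OF bdd_diff[OF bS bEFS]]])
  have CB01: "AE x in M. 0 \<le> CB x \<and> CB x \<le> 1"
  proof -
    have "AE x in M. CB x \<ge> 0" unfolding CB_eq
      by (rule sigma_finite_subalgebra.real_cond_exp_ge_c[OF sfsF I[OF bQ]]) (use Q01 in \<open>eventually_elim, simp\<close>)
    moreover have "AE x in M. CB x \<le> 1" unfolding CB_eq
      by (rule sigma_finite_subalgebra.real_cond_exp_le_c[OF sfsF I[OF bQ]]) (use Q01 in \<open>eventually_elim, simp\<close>)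
    ultimately show ?thesis by eventually_elim simp
  qed
  have npos: "real n > 0" using n by simp
  have bnd: "(\<integral>\<omega>. sqrt (cvS \<omega>) * (2 * sqrt (CB \<omega> * (1 - CB \<omega>)) - sqrt (cvS \<omega>)) \<partial>M)
      \<le> 1 / real n * (\<integral>\<omega>. sqrt (CB \<omega> * (1 - CB \<omega>)) \<partial>M)"
  proof -
    have "(\<integral>\<omega>. sqrt (cvS \<omega>) * (2 * sqrt (CB \<omega> * (1 - CB \<omega>)) - sqrt (cvS \<omega>)) \<partial>M)
        \<le> (\<integral>\<omega>. 1 / real n * sqrt (CB \<omega> * (1 - CB \<omega>)) \<partial>M)"
    proof (rule integral_mono_AE)
      show "AE x in M. sqrt (cvS x) * (2 * sqrt (CB x * (1 - CB x)) - sqrt (cvS x)) \<le> 1 / real n * sqrt (CB x * (1 - CB x))"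
        using vb cvS0 CB01
      proof eventually_elim
        case (elim x)
        define s where "s = sqrt (cvS x)"
        define a where "a = sqrt (CB x * (1 - CB x))"
        have s0: "s \<ge> 0" unfolding s_def using elim by simp
        have a0: "a \<ge> 0" unfolding a_def using elim by simp
        have "1 / (4 * (real n)\<^sup>2) = (1 / (2 * real n))\<^sup>2" by (simp add: power2_eq_square)
        then have "cvS x \<le> (1 / (2 * real n))\<^sup>2" using elim by simp
        then have "s \<le> sqrt ((1 / (2 * real n))\<^sup>2)" unfolding s_def by (rule real_sqrt_le_mono)
        also have "\<dots> = 1 / (2 * real n)" using npos by simp
        finally have s1: "s \<le> 1 / (2 * real n)" .
        have "s * (2 * a - s) \<le> 2 * a * s" using s0 by (simp add: algebra_simps)
        also have "\<dots> \<le> 2 * a * (1 / (2 * real n))" using a0 s1 by (intro mult_left_mono) auto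
        also have "\<dots> = 1 / real n * a" using npos by simp
        finally show ?case unfolding s_def a_def .
      qed
    qed (intro I bdd_intros bcvS bCB)+
    then show ?thesis by simp
  qed
  show ?thesis using pp bnd unfolding cvS_def F_def CB_def by linarith
qed

theorem corollary2:
  fixes M :: "'a measure" and N :: "'x measure" and X :: "'a \<Rightarrow> 'x" and Y :: "'a \<Rightarrow> bool"
    and f :: "'x \<Rightarrow> real" and R :: "'x \<Rightarrow> nat" and B :: "nat \<Rightarrow> real set" and J :: "nat set"
  assumes "prob_space M"
    and "X \<in> measurable M N"
    and "Y \<in> measurable M (count_space UNIV)"
    and "f \<in> borel_measurable N"
    and "\<forall>x\<in>space N. 0 \<le> f x \<and> f x \<le> 1"
    and "R \<in> measurable N (count_space UNIV)"
    and "interval_partition B J"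
  defines "Q \<equiv> real_cond_exp M (gen M N X) (\<lambda>\<omega>. if Y \<omega> then 1 else 0)"
    and "S \<equiv> (\<lambda>\<omega>. f (X \<omega>))"
    and "Rw \<equiv> (\<lambda>\<omega>. R (X \<omega>))"
  shows "MSE M S Q = CL M S Q + GL M S Q
    \<and> CL M S Q + GL M S Q \<ge> ece_B M B J S Q + GL_lower M B J S Q Rw
           - (\<integral>\<omega>. sqrt (cond_var M (bin_sigma M B J S) S \<omega>) *
                 (2 * sqrt (cond_var M (bin_sigma M B J S) (calib M S Q) \<omega>)
                    - sqrt (cond_var M (bin_sigma M B J S) S \<omega>)) \<partial>M)
    \<and> ece_B M B J S Q + GL_lower M B J S Q Rw
           - (\<integral>\<omega>. sqrt (cond_var M (bin_sigma M B J S) S \<omega>) *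
                 (2 * sqrt (cond_var M (bin_sigma M B J S) (calib M S Q) \<omega>)
                    - sqrt (cond_var M (bin_sigma M B J S) S \<omega>)) \<partial>M)
         \<ge> ece_B M B J S Q + GL_lower M B J S Q Rw
           - (\<integral>\<omega>. sqrt (cond_var M (bin_sigma M B J S) S \<omega>) *
                 (2 * sqrt (bin_calib M B J S Q \<omega> * (1 - bin_calib M B J S Q \<omega>))
                    - sqrt (cond_var M (bin_sigma M B J S) S \<omega>)) \<partial>M)
    \<and> (\<forall>n::nat. n \<ge> 1 \<longrightarrow>
           MSE M S Q \<ge> ece_B M (eq_bins n) {..<n} S Q + GL_lower M (eq_bins n) {..<n} S Q Rw
             - 1 / real n * (\<integral>\<omega>. sqrt (bin_calib M (eq_bins n) {..<n} S Q \<omega>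
                                  * (1 - bin_calib M (eq_bins n) {..<n} S Q \<omega>)) \<partial>M))"
proof -
  have P: "prob_space M" by fact
  have Xm: "X \<in> measurable M N" by fact
  have Ym: "Y \<in> measurable M (count_space UNIV)" by fact
  have fm: "f \<in> borel_measurable N" by fact
  have f01: "\<forall>x\<in>space N. 0 \<le> f x \<and> f x \<le> 1" by fact
  have Rm: "R \<in> measurable N (count_space UNIV)" by fact
  have IP: "interval_partition B J" by fact
  have I: "bdd M g \<Longrightarrow> integrable M g" for g using bdd_integrable[OF P] .
  have sfsN: "sigma_finite_subalgebra M (gen M N X)" by (rule gen_sfs[OF P Xm])
  have Yim: "(\<lambda>\<omega>. if Y \<omega> then 1 else 0 :: real) \<in> borel_measurable M"
    by (rule measurable_compose[OF Ym, where g="\<lambda>b. if b then 1 else 0"]) simp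
  have bYi: "bdd M (\<lambda>\<omega>. if Y \<omega> then 1 else 0 :: real)"
    by (rule bdd_bound[OF Yim, where c=1]) (auto intro!: AE_I2)
  have bQ: "bdd M Q" unfolding Q_def by (rule bdd_cond_exp[OF sfsN P bYi])
  have Q01: "AE x in M. 0 \<le> Q x \<and> Q x \<le> 1"
  proof -
    have "AE x in M. Q x \<ge> 0" unfolding Q_def
      by (rule sigma_finite_subalgebra.real_cond_exp_ge_c[OF sfsN I[OF bYi]]) (auto intro!: AE_I2)
    moreover have "AE x in M. Q x \<le> 1" unfolding Q_def
      by (rule sigma_finite_subalgebra.real_cond_exp_le_c[OF sfsN I[OF bYi]]) (auto intro!: AE_I2)
    ultimately show ?thesis by eventually_elim simp
  qed
  have Sm: "S \<in> borel_measurable M" unfolding S_def by (rule measurable_compose[OF Xm fm])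
  have S01: "0 \<le> S \<omega> \<and> S \<omega> \<le> 1" if "\<omega> \<in> space M" for \<omega>
  proof -
    have "X \<omega> \<in> space N" using Xm that by (rule measurable_space)
    then show ?thesis unfolding S_def using f01 by blast
  qed
  have Rwm: "Rw \<in> measurable M (count_space UNIV)" unfolding Rw_def by (rule measurable_compose[OF Xm Rm])
  note p123 = part123[OF P Sm S01 bQ Q01 Rwm IP]
  have p4: "\<forall>n::nat. n \<ge> 1 \<longrightarrow>
           MSE M S Q \<ge> ece_B M (eq_bins n) {..<n} S Q + GL_lower M (eq_bins n) {..<n} S Q Rw
             - 1 / real n * (\<integral>\<omega>. sqrt (bin_calib M (eq_bins n) {..<n} S Q \<omega>
                                  * (1 - bin_calib M (eq_bins n) {..<n} S Q \<omega>)) \<partial>M)"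
    using part4[OF P Sm S01 bQ Q01 Rwm] by blast
  show ?thesis using p123 p4 by blast
qed

end
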